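(* Let $N<M$ be positive integers, $p=1/M$, and let $\lambda\le N$ be a non-negative integer. For every non-negative integer $k$, $$P(X_{N,p,\lambda}=k)=\binom{N-\lambda}{k}p^k(\lambda+1)(k+\lambda+1)^{k-1}\bigl(1-(k+\lambda+1)p\bigr)^{N-\lambda-k}.$$
   Context: A configuration $\omega$ is an assignment to each neuron $j\in\{1,\dots,N\}$ of an energy level $E_j(\omega)\in\{1,\dots,M\}$. Let $Y_i(\omega)=\#\{j:E_j(\omega)=i\}$ and $A_{N,p}(\omega)=\inf\{i\ge0:\sum_{j=M-i}^{M}Y_j(\omega)\le i\}$. Under the uniform measure $P$, the levels $E_1,\dots,E_N$ are i.i.d. uniform on $\{1,\dots,M\}$. Given $\omega$, define $\omega'$ by $E_j(\omega')=M$ for $j\le\lambda$ and $E_j(\omega')=E_j(\omega)$ for $j>\lambda$, and set $X_{N,p,\lambda}(\omega)=A_{N,p}(\omega')-\lambda$. *)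

theory Defs
  imports "HOL-Probability.Probability"
begin

text \<open>Configurations: E :: nat => nat with E j the energy level of neuron j (j in {1..N}),
  values in {1..M}; extensional (undefined outside {1..N}).\<close>

definition configs :: "nat \<Rightarrow> nat \<Rightarrow> (nat \<Rightarrow> nat) set" where
  "configs N M = PiE {1..N} (\<lambda>_. {1..M})"

definition occ :: "nat \<Rightarrow> (nat \<Rightarrow> nat) \<Rightarrow> nat \<Rightarrow> nat" where
  "occ N E i = card {j \<in> {1..N}. E j = i}"

definition A_stat :: "nat \<Rightarrow> nat \<Rightarrow> (nat \<Rightarrow> nat) \<Rightarrow> nat" where
  "A_stat N M E = (LEAST i::nat. (\<Sum>j = M - i..M. occ N E j) \<le> i)"

definition shift_config :: "nat \<Rightarrow> nat \<Rightarrow> nat \<Rightarrow> (nat \<Rightarrow> nat) \<Rightarrow> (nat \<Rightarrow> nat)" where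
  "shift_config N M lam E = (\<lambda>j. if j \<in> {1..N} then (if j \<le> lam then M else E j) else undefined)"

definition X_stat :: "nat \<Rightarrow> nat \<Rightarrow> nat \<Rightarrow> (nat \<Rightarrow> nat) \<Rightarrow> int" where
  "X_stat N M lam E = int (A_stat N M (shift_config N M lam E)) - int lam"

end

theory Submission imports Defs begin

definition pf :: "nat \<Rightarrow> nat \<Rightarrow> nat" where
  "pf L k = (if k = 0 then 1 else (L+1)*(k+L+1)^(k-1))"

lemma sum_c_choose: "(\<Sum>c\<le>k. (k choose c) * c * x^(k-c)) = k * (x+1::nat)^(k-1)"
proof (cases k)
  case 0 then show ?thesis by simp
next
  case (Suc m)
  have "(\<Sum>c\<le>Suc m. (Suc m choose c) * c * x^(Suc m-c)) = (\<Sum>c\<le>m. (Suc m choose Suc c) * Suc c * x^(m-c))"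
    by (subst sum.atMost_Suc_shift) simp
  also have "\<dots> = (\<Sum>c\<le>m. Suc m * ((m choose c) * x^(m-c)))"
  proof (rule sum.cong)
    fix c assume "c \<in> {..m}"
    have "(Suc m choose Suc c) * Suc c = Suc m * (m choose c)" using Suc_times_binomial[of c m] by (simp only: mult.commute)
    then show "(Suc m choose Suc c) * Suc c * x^(m-c) = Suc m * ((m choose c) * x^(m-c))" by (metis mult.assoc)
  qed simp
  also have "\<dots> = Suc m * (x+1)^m"
    using binomial[of 1 x m] by (simp add: sum_distrib_left add.commute)
  finally show ?thesis using Suc by simp
qed

lemma sum_binom1: "(\<Sum>c\<le>k. (k choose c) * x^(k-c)) = (x+1::nat)^k"
proof -
  have "(1+x)^k = (\<Sum>c\<le>k. (k choose c) * 1^c * x^(k-c))" using binomial[of 1 x k] by simp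
  then show ?thesis by (simp add: add.commute)
qed

lemma pf_identity:
  "(\<Sum>c\<le>k. (if 1 \<le> L+c then (k choose c) * pf (L+c-1) (k-c) else 0)) + (if L = 0 \<and> k = 0 then 1 else 0) = pf L k"
proof (cases "k = 0")
  case True then show ?thesis by (simp add: pf_def)
next
  case False
  define w where "w c = (if c < k then (L+c) * (L+k)^(k-c-1) else 1)" for c
  have 1: "(\<Sum>c\<le>k. (if 1 \<le> L+c then (k choose c) * pf (L+c-1) (k-c) else 0)) = (\<Sum>c\<le>k. (k choose c) * w c)"
  proof (rule sum.cong)
    fix c assume c: "c \<in> {..k}"
    show "(if 1 \<le> L+c then (k choose c) * pf (L+c-1) (k-c) else 0) = (k choose c) * w c"
    proof (cases "c < k")
      case True
      then show ?thesis
      proof (cases "1 \<le> L + c")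
        case True
        have e1: "L+c-1+1 = L+c" "k-c+(L+c-1)+1 = L+k" using True \<open>c < k\<close> by auto
        show ?thesis using True \<open>c < k\<close> unfolding pf_def w_def by (simp only: e1) simp
      qed (simp add: w_def)
    next
      case False
      then have "c = k" using c by simp
      then show ?thesis using \<open>k \<noteq> 0\<close> by (simp add: w_def pf_def)
    qed
  qed simp
  have 2: "(L+k) * (\<Sum>c\<le>k. (k choose c) * w c) = (\<Sum>c\<le>k. (k choose c) * (L+c) * (L+k)^(k-c))"
    unfolding sum_distrib_left
  proof (rule sum.cong)
    fix c assume "c \<in> {..k}"
    then show "(L + k) * ((k choose c) * w c) = (k choose c) * (L + c) * (L + k) ^ (k - c)"
      using False by (cases "c < k") (auto simp: w_def power_eq_if)
  qed simp
  also have "\<dots> = L * (\<Sum>c\<le>k. (k choose c) * (L+k)^(k-c)) + (\<Sum>c\<le>k. (k choose c) * c * (L+k)^(k-c))"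
    by (simp add: sum_distrib_left sum.distrib algebra_simps)
  also have "\<dots> = L * (L+k+1)^k + k * (L+k+1)^(k-1)"
    by (simp add: sum_c_choose sum_binom1)
  also have "\<dots> = (L+k) * ((L+1)*(k+L+1)^(k-1))"
  proof -
    have "(L+k+1)^k = (L+k+1) * (L+k+1)^(k-1)" using False by (simp add: power_eq_if)
    then show ?thesis by (simp add: algebra_simps)
  qed
  finally have "(\<Sum>c\<le>k. (k choose c) * w c) = (L+1)*(k+L+1)^(k-1)" using False by simp
  then show ?thesis using 1 False by (simp add: pf_def)
qed

definition cnt :: "nat \<Rightarrow> nat set \<Rightarrow> (nat \<Rightarrow> nat) \<Rightarrow> nat \<Rightarrow> nat" where
  "cnt M J f i = card {j \<in> J. M - i \<le> f j}"

definition Qp :: "nat \<Rightarrow> nat \<Rightarrow> nat set \<Rightarrow> (nat \<Rightarrow> nat) \<Rightarrow> nat \<Rightarrow> bool" where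
  "Qp L M J f k \<longleftrightarrow> (\<forall>i < L+k. i < L + cnt M J f i) \<and> L + cnt M J f (L+k) \<le> L+k"

lemma cnt_cong: "(\<And>j. j \<in> J \<Longrightarrow> f j = g j) \<Longrightarrow> cnt M J f i = cnt M J g i"
  unfolding cnt_def by (rule arg_cong[where f=card]) auto

lemma Qp_cong: "(\<And>j. j \<in> J \<Longrightarrow> f j = g j) \<Longrightarrow> Qp L M J f k = Qp L M J g k"
  unfolding Qp_def using cnt_cong[of J f g M] by simp

lemma cnt0:
  assumes "f \<in> PiE J (\<lambda>_. {1..Suc M})"
  shows "cnt (Suc M) J f 0 = card {j \<in> J. f j = Suc M}"
proof -
  have "{j \<in> J. Suc M - 0 \<le> f j} = {j \<in> J. f j = Suc M}"
    using assms by (force simp: PiE_iff)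
  then show ?thesis unfolding cnt_def by simp
qed

lemma cntS:
  assumes "f \<in> PiE J (\<lambda>_. {1..Suc M})" "finite J" "i \<ge> 1"
  shows "cnt (Suc M) J f i = card {j \<in> J. f j = Suc M} + cnt M (J - {j \<in> J. f j = Suc M}) f (i - 1)"
proof -
  let ?C = "{j \<in> J. f j = Suc M}"
  have "{j \<in> J. Suc M - i \<le> f j} = ?C \<union> {j \<in> J - ?C. M - (i - 1) \<le> f j}"
    using assms by (auto simp: PiE_iff)
  moreover have "card (?C \<union> {j \<in> J - ?C. M - (i - 1) \<le> f j}) = card ?C + card {j \<in> J - ?C. M - (i - 1) \<le> f j}"
    by (rule card_Un_disjoint) (use assms in auto)
  ultimately show ?thesis unfolding cnt_def by simp
qed

lemma Qp_rec:
  assumes f: "f \<in> PiE J (\<lambda>_. {1..Suc M})" and fin: "finite J"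
  defines "C \<equiv> {j \<in> J. f j = Suc M}"
  shows "Qp L (Suc M) J f k \<longleftrightarrow> (if L + card C = 0 then k = 0
          else card C \<le> k \<and> Qp (L + card C - 1) M (J - C) f (k - card C))"
proof -
  have c0: "cnt (Suc M) J f 0 = card C" using cnt0[OF f] C_def by simp
  have cS: "\<And>i. i \<ge> 1 \<Longrightarrow> cnt (Suc M) J f i = card C + cnt M (J - C) f (i - 1)"
    using cntS[OF f fin] C_def by simp
  show ?thesis
  proof (cases "L + card C = 0")
    case True
    then have L0: "L = 0" and C0: "card C = 0" by auto
    show ?thesis
    proof (cases "k = 0")
      case True then show ?thesis using L0 C0 c0 by (simp add: Qp_def)
    next
      case False
      then have "\<not> Qp L (Suc M) J f k" using L0 C0 c0 unfolding Qp_def by force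
      then show ?thesis using False True by simp
    qed
  next
    case False
    let ?c = "card C"
    have "Qp L (Suc M) J f k \<longleftrightarrow> ?c \<le> k \<and> Qp (L + ?c - 1) M (J - C) f (k - ?c)"
    proof
      assume Q: "Qp L (Suc M) J f k"
      have LK: "L + k \<ge> 1"
      proof (rule ccontr)
        assume "\<not> ?thesis"
        then have "L = 0" "k = 0" by auto
        then show False using Q c0 False unfolding Qp_def by simp
      qed
      have last: "L + (?c + cnt M (J - C) f (L + k - 1)) \<le> L + k"
        using Q cS[OF LK] unfolding Qp_def by simp
      then have ck: "?c \<le> k" by simp
      have "\<forall>i < (L + ?c - 1) + (k - ?c). i < (L + ?c - 1) + cnt M (J - C) f i"
      proof (intro allI impI)
        fix i assume "i < L + ?c - 1 + (k - ?c)"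
        then have "Suc i < L + k" using ck False by simp
        then have "Suc i < L + cnt (Suc M) J f (Suc i)" using Q unfolding Qp_def by blast
        then show "i < (L + ?c - 1) + cnt M (J - C) f i" using cS[of "Suc i"] False by simp
      qed
      moreover have "(L + ?c - 1) + cnt M (J - C) f ((L + ?c - 1) + (k - ?c)) \<le> (L + ?c - 1) + (k - ?c)"
      proof -
        have e2: "(L + ?c - 1) + (k - ?c) = L + k - 1" using ck False by arith
        show ?thesis unfolding e2 using last ck False by arith
      qed
      ultimately show "?c \<le> k \<and> Qp (L + ?c - 1) M (J - C) f (k - ?c)"
        using ck unfolding Qp_def by blast
    next
      assume R: "?c \<le> k \<and> Qp (L + ?c - 1) M (J - C) f (k - ?c)"
      then have ck: "?c \<le> k" and Q': "Qp (L + ?c - 1) M (J - C) f (k - ?c)" by auto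
      have e: "(L + ?c - 1) + (k - ?c) = L + k - 1" using ck False by arith
      have LK: "L + k \<ge> 1" using ck False by arith
      have "\<forall>i < L + k. i < L + cnt (Suc M) J f i"
      proof (intro allI impI)
        fix i assume i: "i < L + k"
        show "i < L + cnt (Suc M) J f i"
        proof (cases i)
          case 0 then show ?thesis using c0 False by simp
        next
          case (Suc i')
          then have "i' < (L + ?c - 1) + (k - ?c)" using e i by simp
          then have "i' < (L + ?c - 1) + cnt M (J - C) f i'" using Q' unfolding Qp_def by blast
          then show ?thesis using cS[of i] Suc False by simp
        qed
      qed
      moreover have "L + cnt (Suc M) J f (L + k) \<le> L + k"
      proof -
        have "(L + ?c - 1) + cnt M (J - C) f (L + k - 1) \<le> L + k - 1" using Q' e unfolding Qp_def by simp
        then show ?thesis using cS[OF LK] False LK by (simp; arith)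
      qed
      ultimately show "Qp L (Suc M) J f k" unfolding Qp_def by blast
    qed
    then show ?thesis using False by auto
  qed
qed

lemma card_fix:
  assumes fin: "finite J" and CJ: "C \<subseteq> J"
  shows "card {f \<in> PiE J (\<lambda>_. {1..Suc M}). {j \<in> J. f j = Suc M} = C \<and> R (restrict f (J - C))}
       = card {g \<in> PiE (J - C) (\<lambda>_. {1..M}). R g}"
proof (rule bij_betw_same_card)
  show "bij_betw (\<lambda>f. restrict f (J - C)) {f \<in> PiE J (\<lambda>_. {1..Suc M}). {j \<in> J. f j = Suc M} = C \<and> R (restrict f (J - C))}
       {g \<in> PiE (J - C) (\<lambda>_. {1..M}). R g}"
  proof (rule bij_betw_byWitness[where f'="\<lambda>g j. if j \<in> C then Suc M else g j"])
    show "\<forall>a\<in>{f \<in> PiE J (\<lambda>_. {1..Suc M}). {j \<in> J. f j = Suc M} = C \<and> R (restrict f (J - C))}.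
        (\<lambda>j. if j \<in> C then Suc M else restrict a (J - C) j) = a"
      by (auto simp: PiE_iff extensional_def fun_eq_iff)
    show "\<forall>a'\<in>{g \<in> PiE (J - C) (\<lambda>_. {1..M}). R g}. restrict (\<lambda>j. if j \<in> C then Suc M else a' j) (J - C) = a'"
      by (auto simp: PiE_iff extensional_def fun_eq_iff)
    show "(\<lambda>f. restrict f (J - C)) ` {f \<in> PiE J (\<lambda>_. {1..Suc M}). {j \<in> J. f j = Suc M} = C \<and> R (restrict f (J - C))}
       \<subseteq> {g \<in> PiE (J - C) (\<lambda>_. {1..M}). R g}"
    proof (rule image_subsetI)
      fix f assume "f \<in> {f \<in> PiE J (\<lambda>_. {1..Suc M}). {j \<in> J. f j = Suc M} = C \<and> R (restrict f (J - C))}"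
      then have f: "f \<in> PiE J (\<lambda>_. {1..Suc M})" "{j \<in> J. f j = Suc M} = C" "R (restrict f (J - C))" by auto
      have "\<forall>j \<in> J - C. f j \<in> {1..M}"
        using f(1,2) by (force simp: PiE_iff)
      then have "restrict f (J - C) \<in> PiE (J - C) (\<lambda>_. {1..M})"
        by (simp add: restrict_PiE_iff)
      then show "restrict f (J - C) \<in> {g \<in> PiE (J - C) (\<lambda>_. {1..M}). R g}"
        using f by simp
    qed
    show "(\<lambda>g j. if j \<in> C then Suc M else g j) ` {g \<in> PiE (J - C) (\<lambda>_. {1..M}). R g}
       \<subseteq> {f \<in> PiE J (\<lambda>_. {1..Suc M}). {j \<in> J. f j = Suc M} = C \<and> R (restrict f (J - C))}"
    proof (rule image_subsetI)
      fix g assume "g \<in> {g \<in> PiE (J - C) (\<lambda>_. {1..M}). R g}"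
      then have g: "g \<in> PiE (J - C) (\<lambda>_. {1..M})" "R g" by auto
      have gj: "\<And>j. j \<in> J - C \<Longrightarrow> g j \<in> {1..M}" using g(1) by (auto simp: PiE_iff)
      have "\<And>j. j \<notin> J - C \<Longrightarrow> g j = undefined" using g(1) by (auto simp: PiE_iff extensional_def)
      then have 1: "(\<lambda>j. if j \<in> C then Suc M else g j) \<in> PiE J (\<lambda>_. {1..Suc M})"
        using gj CJ by (auto simp: PiE_iff extensional_def) (metis DiffI atLeastAtMost_iff le_SucI)
      have 2: "{j \<in> J. (if j \<in> C then Suc M else g j) = Suc M} = C"
        using g CJ by (force simp: PiE_iff)
      have 3: "restrict (\<lambda>j. if j \<in> C then Suc M else g j) (J - C) = g"
        using g by (auto simp: PiE_iff extensional_def fun_eq_iff)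
      show "(\<lambda>j. if j \<in> C then Suc M else g j) \<in> {f \<in> PiE J (\<lambda>_. {1..Suc M}). {j \<in> J. f j = Suc M} = C \<and> R (restrict f (J - C))}"
        using 1 2 3 g by simp
    qed
  qed
qed

lemma sum_pow_card:
  assumes "finite J"
  shows "(\<Sum>C\<in>Pow J. G (card C)) = (\<Sum>c\<le>card J. (card J choose c) * (G c :: nat))"
proof -
  have "(\<Sum>C\<in>Pow J. G (card C)) = (\<Sum>c\<in>{..card J}. \<Sum>C\<in>{C. C \<in> Pow J \<and> card C = c}. G (card C))"
    by (rule sum.group[symmetric]) (use assms in \<open>auto intro: card_mono\<close>)
  also have "\<dots> = (\<Sum>c\<le>card J. (card J choose c) * G c)"
  proof (rule sum.cong)
    fix c assume "c \<in> {..card J}"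
    have "(\<Sum>C\<in>{C. C \<in> Pow J \<and> card C = c}. G (card C)) = (\<Sum>C\<in>{C. C \<in> Pow J \<and> card C = c}. G c)"
      by (rule sum.cong) auto
    also have "\<dots> = card {C. C \<subseteq> J \<and> card C = c} * G c" by simp
    also have "\<dots> = (card J choose c) * G c" using n_subsets[OF assms] by simp
    finally show "(\<Sum>C\<in>{C. C \<in> Pow J \<and> card C = c}. G (card C)) = (card J choose c) * G c" .
  qed simp
  finally show ?thesis .
qed


lemma arith_main:
  fixes L n M k :: nat
  shows "(\<Sum>c\<le>n. (n choose c) * (if L + c = 0 then (if k = 0 then M^n else 0)
            else if c \<le> k then ((n-c) choose (k-c)) * pf (L+c-1) (k-c) * (M - (k+L))^(n-k) else 0))
         = (n choose k) * pf L k * (M - (k+L))^(n-k)"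
proof (cases "k \<le> n")
  case False
  have "(\<Sum>c\<le>n. (n choose c) * (if L + c = 0 then (if k = 0 then M^n else 0)
            else if c \<le> k then ((n-c) choose (k-c)) * pf (L+c-1) (k-c) * (M - (k+L))^(n-k) else 0)) = 0"
    using False by (intro sum.neutral) auto
  then show ?thesis using False by simp
next
  case True
  define B where "B = M - (k+L)"
  define H where "H c = (if c \<le> k then (if 1 \<le> L+c then (k choose c) * pf (L+c-1) (k-c) else 0)
       + (if c = 0 \<and> L = 0 \<and> k = 0 then 1 else 0) else 0)" for c
  have trm: "(n choose c) * (if L + c = 0 then (if k = 0 then M^n else 0)
            else if c \<le> k then ((n-c) choose (k-c)) * pf (L+c-1) (k-c) * (M - (k+L))^(n-k) else 0)
        = (n choose k) * B^(n-k) * H c" if "c \<le> n" for c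
  proof -
    consider "L + c = 0" | "L + c \<noteq> 0" "c \<le> k" | "L + c \<noteq> 0" "\<not> c \<le> k" by blast
    then show ?thesis
    proof cases
      case 1
      then show ?thesis by (cases "k = 0") (auto simp: H_def B_def)
    next
      case 2
      have "(n choose k) * (k choose c) = (n choose c) * ((n - c) choose (k - c))"
        using choose_mult[OF 2(2) True] .
      then have "(n choose c) * (((n-c) choose (k-c)) * pf (L+c-1) (k-c) * B^(n-k))
          = (n choose k) * B^(n-k) * ((k choose c) * pf (L+c-1) (k-c))"
        by (metis mult.assoc mult.commute)
      moreover have "H c = (k choose c) * pf (L+c-1) (k-c)" using 2 by (auto simp: H_def)
      moreover have "(if L + c = 0 then (if k = 0 then M^n else 0)
            else if c \<le> k then ((n-c) choose (k-c)) * pf (L+c-1) (k-c) * (M - (k+L))^(n-k) else 0)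
          = ((n-c) choose (k-c)) * pf (L+c-1) (k-c) * B^(n-k)" unfolding B_def by (simp only: if_not_P[OF 2(1)] if_P[OF 2(2)])
      ultimately show ?thesis by simp
    next
      case 3
      then show ?thesis by (simp add: H_def)
    qed
  qed
  have "(\<Sum>c\<le>n. H c) = (\<Sum>c\<le>k. H c)"
    by (rule sum.mono_neutral_right) (use True in \<open>auto simp: H_def\<close>)
  also have "\<dots> = (\<Sum>c\<le>k. (if 1 \<le> L+c then (k choose c) * pf (L+c-1) (k-c) else 0))
       + (\<Sum>c\<le>k. (if c = 0 \<and> L = 0 \<and> k = 0 then 1 else 0))"
    unfolding H_def by (simp add: sum.distrib)
  also have "(\<Sum>c\<le>k. (if c = 0 \<and> L = 0 \<and> k = 0 then 1 else 0)) = (if L = 0 \<and> k = 0 then 1 else (0::nat))"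
    by (cases "L = 0 \<and> k = 0") auto
  also have "(\<Sum>c\<le>k. (if 1 \<le> L+c then (k choose c) * pf (L+c-1) (k-c) else 0)) + (if L = 0 \<and> k = 0 then 1 else 0) = pf L k"
    by (rule pf_identity)
  finally have sH: "(\<Sum>c\<le>n. H c) = pf L k" .
  have "(\<Sum>c\<le>n. (n choose c) * (if L + c = 0 then (if k = 0 then M^n else 0)
            else if c \<le> k then ((n-c) choose (k-c)) * pf (L+c-1) (k-c) * (M - (k+L))^(n-k) else 0))
     = (\<Sum>c\<le>n. (n choose k) * B^(n-k) * H c)"
    by (rule sum.cong[OF refl], rule trm) simp
  also have "\<dots> = (n choose k) * B^(n-k) * pf L k" by (simp add: sum_distrib_left[symmetric] sH)
  finally show ?thesis by (simp add: B_def mult.commute mult.left_commute)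
qed

lemma main_count:
  "finite J \<Longrightarrow> L + card J < M \<Longrightarrow>
   card {f \<in> PiE J (\<lambda>_. {1..M}). Qp L M J f k} = (card J choose k) * pf L k * (M - (k+L+1))^(card J - k)"
proof (induction M arbitrary: L J k)
  case 0 then show ?case by simp
next
  case (Suc M L J k)
  note fin = Suc.prems(1)
  define n where "n = card J"
  define A where "A = {f \<in> PiE J (\<lambda>_. {1..Suc M}). Qp L (Suc M) J f k}"
  define G where "G c = (if L + c = 0 then (if k = 0 then M^n else 0)
            else if c \<le> k then ((n-c) choose (k-c)) * pf (L+c-1) (k-c) * (M - (k+L))^(n-k) else 0)" for c
  have finA: "finite A"
    by (rule finite_subset[of _ "PiE J (\<lambda>_. {1..Suc M})"]) (auto simp: A_def intro: finite_PiE fin)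
  have "card A = (\<Sum>C\<in>Pow J. \<Sum>f\<in>{f. f \<in> A \<and> {j\<in>J. f j = Suc M} = C}. 1)"
    unfolding card_eq_sum by (rule sum.group[symmetric]) (use fin finA in auto)
  also have "\<dots> = (\<Sum>C\<in>Pow J. G (card C))"
  proof (rule sum.cong)
    fix C assume "C \<in> Pow J"
    then have CJ: "C \<subseteq> J" by simp
    define R where "R g = (if L + card C = 0 then k = 0 else card C \<le> k \<and> Qp (L + card C - 1) M (J - C) g (k - card C))" for g
    have "{f. f \<in> A \<and> {j\<in>J. f j = Suc M} = C} = {f \<in> PiE J (\<lambda>_. {1..Suc M}). {j\<in>J. f j = Suc M} = C \<and> R (restrict f (J - C))}"
    proof (rule Collect_cong)
      fix f
      show "(f \<in> A \<and> {j\<in>J. f j = Suc M} = C) = (f \<in> PiE J (\<lambda>_. {1..Suc M}) \<and> {j\<in>J. f j = Suc M} = C \<and> R (restrict f (J - C)))"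
      proof (cases "f \<in> PiE J (\<lambda>_. {1..Suc M}) \<and> {j\<in>J. f j = Suc M} = C")
        case True
        have "Qp (L + card C - 1) M (J - C) f (k - card C) = Qp (L + card C - 1) M (J - C) (restrict f (J - C)) (k - card C)"
          by (rule Qp_cong) simp
        then show ?thesis using True Qp_rec[of f J M L k] fin unfolding A_def R_def by auto
      next
        case False then show ?thesis unfolding A_def by auto
      qed
    qed
    then have "(\<Sum>f\<in>{f. f \<in> A \<and> {j\<in>J. f j = Suc M} = C}. 1) = card {g \<in> PiE (J - C) (\<lambda>_. {1..M}). R g}"
      using card_fix[OF fin CJ, of M R] by (simp add: card_eq_sum[symmetric])
    also have "\<dots> = G (card C)"
    proof -
      have cJC: "card (J - C) = n - card C" using CJ fin by (simp add: card_Diff_subset finite_subset n_def)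
      have cn: "card C \<le> n" using CJ fin by (simp add: card_mono n_def)
      consider "L + card C = 0" | "L + card C \<noteq> 0" "card C \<le> k" | "L + card C \<noteq> 0" "\<not> card C \<le> k" by blast
      then show ?thesis
      proof cases
        case 1
        then have "C = {}" using fin CJ by (auto dest: finite_subset)
        show ?thesis
        proof (cases "k = 0")
          case True
          then have "{g \<in> PiE (J - C) (\<lambda>_. {1..M}). R g} = PiE J (\<lambda>_. {1..M})" using 1 \<open>C = {}\<close> by (simp add: R_def)
          then show ?thesis using 1 True fin by (simp add: G_def card_PiE n_def)
        next
          case False
          then show ?thesis using 1 by (simp add: R_def G_def)
        qed
      next
        case 2
        then have "{g \<in> PiE (J - C) (\<lambda>_. {1..M}). R g} = {g \<in> PiE (J - C) (\<lambda>_. {1..M}). Qp (L + card C - 1) M (J - C) g (k - card C)}"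
          using 2 by (auto simp: R_def)
        also have "card \<dots> = (card (J - C) choose (k - card C)) * pf (L + card C - 1) (k - card C)
             * (M - ((k - card C) + (L + card C - 1) + 1))^(card (J - C) - (k - card C))"
          by (rule Suc.IH) (use fin Suc.prems(2) cJC cn 2 n_def in auto)
        also have "(k - card C) + (L + card C - 1) + 1 = k + L" using 2 by arith
        also have "card (J - C) - (k - card C) = n - k" using cJC 2 by simp
        moreover have "G (card C) = ((n - card C) choose (k - card C)) * pf (L + card C - 1) (k - card C) * (M - (k+L))^(n-k)"
          unfolding G_def by (simp only: if_not_P[OF 2(1)] if_P[OF 2(2)])
        ultimately show ?thesis using cJC by simp
      next
        case 3
        then show ?thesis by (simp add: R_def G_def)
      qed
    qed
    finally show "(\<Sum>f\<in>{f. f \<in> A \<and> {j\<in>J. f j = Suc M} = C}. 1) = G (card C)" .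
  qed simp
  also have "\<dots> = (\<Sum>c\<le>n. (n choose c) * G c)" using sum_pow_card[OF fin] n_def by simp
  also have "\<dots> = (n choose k) * pf L k * (M - (k+L))^(n-k)" unfolding G_def by (rule arith_main)
  finally show ?case unfolding A_def n_def by simp
qed


lemma card_prod_PiE:
  assumes "finite I" "finite J" "I \<inter> J = {}"
  shows "card {E \<in> PiE (I \<union> J) B. P (restrict E J)} = card (PiE I B) * card {f \<in> PiE J B. P f}"
proof -
  have "bij_betw (\<lambda>E. (restrict E I, restrict E J)) {E \<in> PiE (I \<union> J) B. P (restrict E J)} (PiE I B \<times> {f \<in> PiE J B. P f})"
  proof (rule bij_betw_byWitness[where f'="\<lambda>(a, b) x. if x \<in> I then a x else b x"])
    show "\<forall>a\<in>{E \<in> PiE (I \<union> J) B. P (restrict E J)}. (case (restrict a I, restrict a J) of (a, b) \<Rightarrow> \<lambda>x. if x \<in> I then a x else b x) = a"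
      by (auto simp: PiE_iff extensional_def fun_eq_iff)
    show "\<forall>a'\<in>PiE I B \<times> {f \<in> PiE J B. P f}. (\<lambda>E. (restrict E I, restrict E J)) (case a' of (a, b) \<Rightarrow> \<lambda>x. if x \<in> I then a x else b x) = a'"
      using assms(3) by (auto simp: PiE_iff extensional_def fun_eq_iff)
    show "(\<lambda>E. (restrict E I, restrict E J)) ` {E \<in> PiE (I \<union> J) B. P (restrict E J)} \<subseteq> PiE I B \<times> {f \<in> PiE J B. P f}"
      by (auto simp: PiE_iff)
    show "(\<lambda>(a, b) x. if x \<in> I then a x else b x) ` (PiE I B \<times> {f \<in> PiE J B. P f}) \<subseteq> {E \<in> PiE (I \<union> J) B. P (restrict E J)}"
    proof (rule image_subsetI)
      fix x assume "x \<in> PiE I B \<times> {f \<in> PiE J B. P f}"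
      then obtain a b where x: "x = (a, b)" and ab: "a \<in> PiE I B" "b \<in> PiE J B" "P b" by auto
      have 1: "(\<lambda>x. if x \<in> I then a x else b x) \<in> PiE (I \<union> J) B"
        using ab by (auto simp: PiE_iff extensional_def)
      have 2: "restrict (\<lambda>x. if x \<in> I then a x else b x) J = b"
        using ab assms(3) by (auto simp: PiE_iff extensional_def fun_eq_iff)
      show "(case x of (a, b) \<Rightarrow> \<lambda>x. if x \<in> I then a x else b x) \<in> {E \<in> PiE (I \<union> J) B. P (restrict E J)}"
        using 1 2 ab x by simp
    qed
  qed
  then have "card {E \<in> PiE (I \<union> J) B. P (restrict E J)} = card (PiE I B \<times> {f \<in> PiE J B. P f})"
    by (rule bij_betw_same_card)
  then show ?thesis by (simp add: card_cartesian_product)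
qed

lemma occ_sum:
  assumes E: "E \<in> configs N M" and lam: "lam \<le> N"
  shows "(\<Sum>j = M - i..M. occ N (shift_config N M lam E) j) = lam + cnt M {Suc lam..N} E i"
proof -
  define E' where "E' = shift_config N M lam E"
  define S where "S = {x \<in> {1..N}. E' x \<in> {M - i..M}}"
  have "(\<Sum>j = M - i..M. occ N E' j) = (\<Sum>v\<in>{M - i..M}. \<Sum>x\<in>{x. x \<in> S \<and> E' x = v}. 1)"
  proof (rule sum.cong[OF refl])
    fix v assume v: "v \<in> {M - i..M}"
    have "{x. x \<in> S \<and> E' x = v} = {x \<in> {1..N}. E' x = v}" using v by (auto simp: S_def)
    then show "occ N E' v = (\<Sum>x\<in>{x. x \<in> S \<and> E' x = v}. 1)" by (simp add: occ_def)
  qed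
  also have "\<dots> = card S"
    unfolding card_eq_sum by (rule sum.group) (auto simp: S_def)
  also have "S = {1..lam} \<union> {j \<in> {Suc lam..N}. M - i \<le> E j}"
    using E lam by (auto simp: S_def E'_def shift_config_def configs_def PiE_iff)
  also have "card \<dots> = lam + cnt M {Suc lam..N} E i"
    by (subst card_Un_disjoint) (auto simp: cnt_def)
  finally show ?thesis unfolding E'_def .
qed

lemma X_iff:
  assumes E: "E \<in> configs N M" and lam: "lam \<le> N"
  shows "X_stat N M lam E = int k \<longleftrightarrow> Qp lam M {Suc lam..N} E k"
proof -
  define P where "P i \<longleftrightarrow> lam + cnt M {Suc lam..N} E i \<le> i" for i
  have A: "A_stat N M (shift_config N M lam E) = (LEAST i. P i)"
    unfolding A_stat_def P_def using occ_sum[OF E lam] by simp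
  have ex: "P N"
  proof -
    have "cnt M {Suc lam..N} E N \<le> card {Suc lam..N}" unfolding cnt_def by (rule card_mono) auto
    then show ?thesis using lam by (simp add: P_def)
  qed
  have "X_stat N M lam E = int k \<longleftrightarrow> (LEAST i. P i) = lam + k"
    unfolding X_stat_def A by linarith
  also have "\<dots> \<longleftrightarrow> P (lam + k) \<and> (\<forall>i < lam + k. \<not> P i)"
  proof
    assume h: "(LEAST i. P i) = lam + k"
    show "P (lam + k) \<and> (\<forall>i < lam + k. \<not> P i)"
      using LeastI[of P N, OF ex] not_less_Least[of _ P] h by metis
  next
    assume h: "P (lam + k) \<and> (\<forall>i < lam + k. \<not> P i)"
    show "(LEAST i. P i) = lam + k"
      by (rule Least_equality) (use h in \<open>auto simp: not_less[symmetric]\<close>)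
  qed
  also have "\<dots> \<longleftrightarrow> Qp lam M {Suc lam..N} E k"
    unfolding Qp_def P_def by auto
  finally show ?thesis .
qed


lemma pf_real: "real (pf L k) = real (L + 1) * (real (k + L + 1)) powi (int k - 1)"
proof (cases "k = 0")
  case True then show ?thesis by (simp add: pf_def power_int_minus)
next
  case False
  then have e: "int k - 1 = int (k - 1)" by simp
  have "(real (k + L + 1)) powi (int k - 1) = real (k + L + 1) ^ (k - 1)"
    by (simp only: e power_int_of_nat)
  then show ?thesis using False by (simp add: pf_def algebra_simps)
qed

theorem mainTheorem4:
  fixes N M lam k :: nat and p :: real
  assumes "0 < N" and "N < M" and "p = 1 / real M" and "lam \<le> N"
  shows "measure_pmf.prob (pmf_of_set (configs N M)) {E. X_stat N M lam E = int k}
    = real ((N - lam) choose k) * p ^ k * real (lam + 1)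
      * (real (k + lam + 1)) powi (int k - 1)
      * (1 - real (k + lam + 1) * p) ^ (N - lam - k)"
proof -
  define J where "J = {Suc lam..N}"
  define n where "n = N - lam"
  have cJ: "card J = n" by (simp add: J_def n_def)
  have fin: "finite (configs N M)" unfolding configs_def by (auto intro: finite_PiE)
  have cc: "card (configs N M) = M ^ N" unfolding configs_def by (simp add: card_PiE)
  have ne: "configs N M \<noteq> {}"
  proof
    assume "configs N M = {}"
    then have "M ^ N = 0" using cc by simp
    then show False using assms(2) by simp
  qed
  have un: "{1..N} = {1..lam} \<union> J" using assms(4) by (auto simp: J_def)
  have "configs N M \<inter> {E. X_stat N M lam E = int k} = {E \<in> configs N M. Qp lam M J E k}"
    using X_iff[OF _ assms(4)] by (auto simp: J_def)
  also have "\<dots> = {E \<in> PiE ({1..lam} \<union> J) (\<lambda>_. {1..M}). Qp lam M J (restrict E J) k}"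
    unfolding configs_def un using Qp_cong[of J _ "restrict _ J"] by (metis (no_types, lifting) restrict_apply')
  finally have "card (configs N M \<inter> {E. X_stat N M lam E = int k})
     = card (PiE {1..lam} (\<lambda>_. {1..M})) * card {f \<in> PiE J (\<lambda>_. {1..M}). Qp lam M J f k}"
    using card_prod_PiE[of "{1..lam}" J] by (simp add: J_def)
  also have "\<dots> = M ^ lam * ((n choose k) * pf lam k * (M - (k + lam + 1)) ^ (n - k))"
    using main_count[of J lam M k] cJ assms by (simp add: card_PiE J_def n_def)
  finally have cardS: "card (configs N M \<inter> {E. X_stat N M lam E = int k}) = M ^ lam * ((n choose k) * pf lam k * (M - (k + lam + 1)) ^ (n - k))" .
  have prob: "measure_pmf.prob (pmf_of_set (configs N M)) {E. X_stat N M lam E = int k}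
     = real (M ^ lam * ((n choose k) * pf lam k * (M - (k + lam + 1)) ^ (n - k))) / real (M ^ N)"
    by (simp add: measure_pmf_of_set[OF ne fin] cardS cc)
  show ?thesis
  proof (cases "k \<le> n")
    case False
    then have z: "((N - lam) choose k) = 0" by (simp add: n_def)
    show ?thesis unfolding prob n_def z by simp
  next
    case True
    have Mpos: "real M > 0" using assms by simp
    have N: "N = lam + k + (n - k)" using True assms(4) by (simp add: n_def)
    have sub: "real (M - (k + lam + 1)) = real M - real (k + lam + 1)" using True assms(2,4) by (simp add: n_def)
    have q: "1 - real (k + lam + 1) * p = real (M - (k + lam + 1)) / real M"
    proof -
      have "1 - real (k + lam + 1) * p = (real M - real (k + lam + 1)) / real M"
        using Mpos unfolding assms(3) by (simp add: field_simps del: of_nat_add of_nat_Suc)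
      then show ?thesis using sub by simp
    qed
    have "real (M ^ lam * ((n choose k) * pf lam k * (M - (k + lam + 1)) ^ (n - k))) / real (M ^ N)
      = real (n choose k) * (1 / real M) ^ k * real (pf lam k) * (real (M - (k + lam + 1)) / real M) ^ (n - k)"
      using Mpos by (subst N) (simp add: power_add field_simps power_divide)
    then show ?thesis using prob q assms(3) pf_real[of lam k] by (simp add: n_def mult.assoc)
  qed
qed

end
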